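(* Let $n\ge 3$ and let $C\in\mathbb{R}^{n\times n}$ be nonnegative, doubly stochastic, irreducible, with zero diagonal entries. Let $x(s)$ evolve by the Modified DeGroot-Friedkin model $x(s+1)=C^\top x(s)+X(s)x(s)-C^\top X(s)x(s)$, $X(s)=\mathrm{diag}(x(s))$, with $x(0)\in\Delta\setminus\{e_1,\dots,e_n\}$. Let $x(s)_{\min}=\min_i x_i(s)$ and $x(s)_{\max}=\max_i x_i(s)$. Then for all $s\ge 0$ and all $i$, $x(s)_{\min}\le x_i(s+1)\le x(s)_{\max}$; in particular $x(s+1)_{\min}\ge x(s)_{\min}$ and $x(s+1)_{\max}\le x(s)_{\max}$.
   Context: $\Delta=\{x\in\mathbb{R}^n: x\ge 0,\ \sum_i x_i=1\}$; $e_i$ is the $i$th standard basis vector. *)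

theory Defs
  imports "HOL-Analysis.Analysis"
begin

definition prob_simplex :: "(real ^ 'n::finite) set" where
  "prob_simplex = {x. (\<forall>i. x $ i \<ge> 0) \<and> (\<Sum>i\<in>UNIV. x $ i) = 1}"

definition std_basis :: "'n \<Rightarrow> real ^ 'n::finite" where
  "std_basis i = (\<chi> j. if j = i then 1 else 0)"

definition diag_mat :: "real ^ 'n \<Rightarrow> real ^ 'n ^ 'n" where
  "diag_mat x = (\<chi> i j. if i = j then x $ i else 0)"

definition nonneg_mat :: "real ^ 'n ^ 'n \<Rightarrow> bool" where
  "nonneg_mat C \<longleftrightarrow> (\<forall>i j. C $ i $ j \<ge> 0)"

definition doubly_stochastic :: "real ^ 'n ^ 'n::finite \<Rightarrow> bool" where
  "doubly_stochastic C \<longleftrightarrow> nonneg_mat C \<and>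
     (\<forall>i. (\<Sum>j\<in>UNIV. C $ i $ j) = 1) \<and> (\<forall>j. (\<Sum>i\<in>UNIV. C $ i $ j) = 1)"

definition irreducible_mat :: "real ^ 'n ^ 'n \<Rightarrow> bool" where
  "irreducible_mat C \<longleftrightarrow> (\<forall>i j. (i, j) \<in> {(a, b). C $ a $ b \<noteq> 0}\<^sup>+)"

definition vmin :: "real ^ 'n::finite \<Rightarrow> real" where
  "vmin x = Min (range (\<lambda>i. x $ i))"

definition vmax :: "real ^ 'n::finite \<Rightarrow> real" where
  "vmax x = Max (range (\<lambda>i. x $ i))"

end

theory Submission
  imports Defs
begin

lemma comp_formula:
  fixes C :: "real ^ 'n ^ 'n" and y :: "real ^ 'n"
  assumes "doubly_stochastic C"
  shows "(transpose C *v y + diag_mat y *v y - transpose C *v (diag_mat y *v y)) $ i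
         = (\<Sum>j\<in>UNIV. C $ j $ i * (y $ j - y $ j * y $ j + y $ i * y $ i))"
proof -
  have cs: "(\<Sum>j\<in>UNIV. C $ j $ i) = 1" using assms unfolding doubly_stochastic_def by blast
  have t: "(transpose C *v z) $ k = (\<Sum>j\<in>UNIV. C $ j $ k * z $ j)" for z k
    by (simp add: matrix_vector_mult_def transpose_def)
  have d: "(diag_mat y *v y) $ k = y $ k * y $ k" for k
    unfolding diag_mat_def matrix_vector_mult_def
    by (simp add: if_distrib[where f="\<lambda>a. a * _"] cong: if_cong)
  have "(\<Sum>j\<in>UNIV. C $ j $ i * (y $ j - y $ j * y $ j + y $ i * y $ i))
      = (\<Sum>j\<in>UNIV. C $ j $ i * y $ j) - (\<Sum>j\<in>UNIV. C $ j $ i * (y $ j * y $ j))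
        + (\<Sum>j\<in>UNIV. C $ j $ i) * (y $ i * y $ i)"
    by (simp add: algebra_simps sum.distrib sum_subtractf sum_distrib_right sum_distrib_left)
  also have "\<dots> = (\<Sum>j\<in>UNIV. C $ j $ i * y $ j) - (\<Sum>j\<in>UNIV. C $ j $ i * (y $ j * y $ j))
        + y $ i * y $ i" using cs by simp
  moreover have "(transpose C *v y + diag_mat y *v y - transpose C *v (diag_mat y *v y)) $ i
     = (\<Sum>j\<in>UNIV. C $ j $ i * y $ j) + y $ i * y $ i - (\<Sum>j\<in>UNIV. C $ j $ i * (diag_mat y *v y) $ j)"
    by (simp only: vector_add_component vector_minus_component t d)
  ultimately show ?thesis by (simp add: d)
qed

lemma pair_bounds:
  fixes a b :: real
  assumes "0 \<le> a" "0 \<le> b" "a + b \<le> 1"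
  shows "min a b \<le> b - b*b + a*a" "b - b*b + a*a \<le> max a b"
proof -
  show "min a b \<le> b - b*b + a*a"
  proof (cases "a \<ge> b")
    case True
    have "0 \<le> (a-b)*(a+b)" using True assms by simp
    then show ?thesis using True assms by (simp add: min_def algebra_simps mult_le_cancel_left1)
  next
    case False
    have "(b-a)*(b+a) \<le> (b-a)" using False assms by (simp add: mult_left_le)
    then show ?thesis using False by (simp add: min_def algebra_simps)
  qed
  show "b - b*b + a*a \<le> max a b"
  proof (cases "a \<ge> b")
    case True
    have "(a-b)*(a+b) \<le> (a-b)" using True assms by (simp add: mult_left_le)
    then show ?thesis using True by (simp add: max_def algebra_simps)
  next
    case False
    have "0 \<le> (b-a)*(b+a)" using False assms by simp
    then show ?thesis using False assms by (simp add: max_def algebra_simps mult_le_cancel_left1)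
  qed
qed

lemma vmin_le: "vmin y \<le> y $ i"
  unfolding vmin_def by (rule Min_le) auto
lemma vmax_ge: "y $ i \<le> vmax y"
  unfolding vmax_def by (rule Max_ge) auto
lemma vmin_ge: "(\<And>i. c \<le> y $ i) \<Longrightarrow> c \<le> vmin y"
  unfolding vmin_def by (subst Min_ge_iff) auto
lemma vmax_le: "(\<And>i. y $ i \<le> c) \<Longrightarrow> vmax y \<le> c"
  unfolding vmax_def by (subst Max_le_iff) auto

lemma step:
  fixes C :: "real ^ 'n ^ 'n" and y :: "real ^ 'n"
  assumes ds: "doubly_stochastic C" and y: "y \<in> prob_simplex"
  defines "y' \<equiv> transpose C *v y + diag_mat y *v y - transpose C *v (diag_mat y *v y)"
  shows "vmin y \<le> y' $ i" "y' $ i \<le> vmax y" "y' \<in> prob_simplex"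
proof -
  have nn: "\<And>k. 0 \<le> y $ k" and s1: "(\<Sum>k\<in>UNIV. y $ k) = 1"
    using y unfolding prob_simplex_def by auto
  have Cnn: "\<And>a b. 0 \<le> C $ a $ b" and cs: "\<And>i. (\<Sum>j\<in>UNIV. C $ j $ i) = 1"
    and rs: "\<And>i. (\<Sum>j\<in>UNIV. C $ i $ j) = 1"
    using ds unfolding doubly_stochastic_def nonneg_mat_def by auto
  have pb: "vmin y \<le> y $ j - y $ j * y $ j + y $ i * y $ i \<and>
            y $ j - y $ j * y $ j + y $ i * y $ i \<le> vmax y" for i j
  proof (cases "i = j")
    case True then show ?thesis using vmin_le[of y j] vmax_ge[of y j] by simp
  next
    case False
    have "y $ i + y $ j = (\<Sum>k\<in>{i,j}. y $ k)" using False by simp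
    also have "\<dots> \<le> (\<Sum>k\<in>UNIV. y $ k)" by (rule sum_mono2) (auto simp: nn)
    finally have "y $ i + y $ j \<le> 1" using s1 by simp
    from pair_bounds[OF nn nn this] have
      "min (y$i) (y$j) \<le> y $ j - y $ j * y $ j + y $ i * y $ i"
      "y $ j - y $ j * y $ j + y $ i * y $ i \<le> max (y$i) (y$j)" by auto
    moreover have "vmin y \<le> min (y$i) (y$j)" "max (y$i) (y$j) \<le> vmax y"
      using vmin_le vmax_ge by auto
    ultimately show ?thesis by linarith
  qed
  have f: "y' $ i = (\<Sum>j\<in>UNIV. C $ j $ i * (y $ j - y $ j * y $ j + y $ i * y $ i))" for i
    unfolding y'_def by (rule comp_formula[OF ds])
  have lo: "vmin y \<le> y' $ i" for i
  proof -
    have "vmin y = (\<Sum>j\<in>UNIV. C $ j $ i * vmin y)" using cs[of i] by (simp add: sum_distrib_right[symmetric])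
    also have "\<dots> \<le> y' $ i" unfolding f by (rule sum_mono) (use pb Cnn in \<open>auto intro: mult_left_mono\<close>)
    finally show ?thesis .
  qed
  have hi: "y' $ i \<le> vmax y" for i
  proof -
    have "y' $ i \<le> (\<Sum>j\<in>UNIV. C $ j $ i * vmax y)" unfolding f
      by (rule sum_mono) (use pb Cnn in \<open>auto intro: mult_left_mono\<close>)
    also have "\<dots> = vmax y" using cs[of i] by (simp add: sum_distrib_right[symmetric])
    finally show ?thesis .
  qed
  show "vmin y \<le> y' $ i" "y' $ i \<le> vmax y" using lo hi by auto
  have vpos: "0 \<le> vmin y" by (rule vmin_ge) (rule nn)
  have d: "(diag_mat y *v y) $ k = y $ k * y $ k" for k
    unfolding diag_mat_def matrix_vector_mult_def
    by (simp add: if_distrib[where f="\<lambda>a. a * _"] cong: if_cong)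
  have tsum: "(\<Sum>i\<in>UNIV. (transpose C *v z) $ i) = (\<Sum>j\<in>UNIV. z $ j)" for z :: "real ^ 'n"
  proof -
    have "(\<Sum>i\<in>UNIV. (transpose C *v z) $ i) = (\<Sum>i\<in>UNIV. \<Sum>j\<in>UNIV. C $ j $ i * z $ j)"
      by (simp add: matrix_vector_mult_def transpose_def)
    also have "\<dots> = (\<Sum>j\<in>UNIV. \<Sum>i\<in>UNIV. C $ j $ i * z $ j)" by (rule sum.swap)
    also have "\<dots> = (\<Sum>j\<in>UNIV. z $ j)" using rs by (simp add: sum_distrib_right[symmetric])
    finally show ?thesis .
  qed
  have "(\<Sum>i\<in>UNIV. y' $ i) = (\<Sum>i\<in>UNIV. (transpose C *v y) $ i) + (\<Sum>i\<in>UNIV. (diag_mat y *v y) $ i)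
        - (\<Sum>i\<in>UNIV. (transpose C *v (diag_mat y *v y)) $ i)"
    unfolding y'_def by (simp add: sum.distrib sum_subtractf)
  also have "\<dots> = 1" using tsum s1 by simp
  finally show "y' \<in> prob_simplex" unfolding prob_simplex_def using lo vpos
    by (auto intro: order_trans)
qed

theorem lemma4:
  fixes C :: "real ^ 'n ^ 'n" and x :: "nat \<Rightarrow> real ^ 'n"
  assumes "CARD('n) \<ge> 3"
    and "nonneg_mat C" and "doubly_stochastic C" and "irreducible_mat C"
    and "\<forall>i. C $ i $ i = 0"
    and "\<forall>s. x (Suc s) = transpose C *v x s + diag_mat (x s) *v x s
                        - transpose C *v (diag_mat (x s) *v x s)"
    and "x 0 \<in> prob_simplex - range std_basis"
  shows "(\<forall>s i. vmin (x s) \<le> x (Suc s) $ i \<and> x (Suc s) $ i \<le> vmax (x s))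
       \<and> (\<forall>s. vmin (x (Suc s)) \<ge> vmin (x s) \<and> vmax (x (Suc s)) \<le> vmax (x s))"
proof -
  have inv: "x s \<in> prob_simplex" for s
  proof (induction s)
    case 0 then show ?case using assms(7) by simp
  next
    case (Suc s) then show ?case using step(3)[OF assms(3) Suc] assms(6) by simp
  qed
  have b: "vmin (x s) \<le> x (Suc s) $ i \<and> x (Suc s) $ i \<le> vmax (x s)" for s i
    using step(1,2)[OF assms(3) inv[of s], of i] assms(6) by simp
  show ?thesis using b by (auto intro: vmin_ge vmax_le)
qed

end
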